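(* Let $d\ge1$, $r\in(0,+\infty)$, let $\|\cdot\|$ be a norm on $\mathbb{R}^d$, and let $P$ be a Borel probability measure on $\mathbb{R}^d$ with $\int\|x\|^r\,dP(x)<+\infty$. Let $(a_n)_{n\ge1}$ be an $L^r$-optimal greedy quantization sequence for $P$, $a^{(n)}=\{a_1,\dots,a_n\}$. Let $\varepsilon\in(0,\tfrac13)$, let $\nu$ be a probability distribution on $\mathbb{R}^d$ and let $g_\varepsilon:\mathbb{R}^d\to\mathbb{R}_+$ be a Borel function such that for every $x\in\operatorname{supp}(P)$ and every $t\in[0,\varepsilon\|x-a_1\|]$, $$\nu(B(x,t))\ge g_\varepsilon(x)\,V_d\,t^d.$$ Then $$\forall n\ge2,\quad e_r(a^{(n)},P)\le \varphi_r(\varepsilon)^{-\frac1d}V_d^{-\frac1d}\Big(\frac rd\Big)^{\frac1d}\Big(\int g_\varepsilon^{-\frac rd}\,dP\Big)^{\frac1r}(n-1)^{-\frac1d},$$ where $\varphi_r(u)=\big(\tfrac{1}{3^r}-u^r\big)u^d$.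
   Context: For a finite nonempty $\Gamma\subset\mathbb{R}^d$, $d(x,\Gamma)=\min_{a\in\Gamma}\|x-a\|$ and $e_r(\Gamma,P)=\big(\int d(x,\Gamma)^r dP(x)\big)^{1/r}$. An $L^r$-optimal greedy quantization sequence for $P$ is a sequence $(a_n)_{n\ge1}$ with $a_{n+1}\in\operatorname{argmin}_{\xi\in\mathbb{R}^d}e_r(a^{(n)}\cup\{\xi\},P)$ for all $n\ge0$, where $a^{(0)}=\varnothing$, $a^{(n)}=\{a_1,\dots,a_n\}$ (so $a_1$ is an $L^r$-median of $P$). $B(x,t)=\{y:\|y-x\|\le t\}$, $\lambda_d$ is Lebesgue measure and $V_d=\lambda_d(B(0,1))$ (ball for $\|\cdot\|$). *)

theory Defs
  imports "HOL-Analysis.Analysis" "HOL-Probability.Probability"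
begin

text \<open>An (arbitrary) norm on the finite-dimensional space 'a (a copy of R^d, d = DIM('a)).\<close>
definition is_norm :: "('a::euclidean_space \<Rightarrow> real) \<Rightarrow> bool" where
  "is_norm N \<longleftrightarrow> (\<forall>x. 0 \<le> N x) \<and> (\<forall>x. N x = 0 \<longleftrightarrow> x = 0)
     \<and> (\<forall>c x. N (c *\<^sub>R x) = \<bar>c\<bar> * N x) \<and> (\<forall>x y. N (x + y) \<le> N x + N y)"

definition nball :: "('a::euclidean_space \<Rightarrow> real) \<Rightarrow> 'a \<Rightarrow> real \<Rightarrow> 'a set" where
  "nball N x t = {y. N (y - x) \<le> t}"

definition unit_ball_vol :: "('a::euclidean_space \<Rightarrow> real) \<Rightarrow> real" where
  "unit_ball_vol N = measure lborel (nball N 0 1)"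

definition ndist_set :: "('a::euclidean_space \<Rightarrow> real) \<Rightarrow> 'a \<Rightarrow> 'a set \<Rightarrow> real" where
  "ndist_set N x \<Gamma> = Min ((\<lambda>a. N (x - a)) ` \<Gamma>)"

text \<open>e_r(\<Gamma>,P) = (\<integral> d(x,\<Gamma>)^r dP)^(1/r) (finite under the moment assumption).\<close>
definition quant_err :: "('a::euclidean_space \<Rightarrow> real) \<Rightarrow> real \<Rightarrow> 'a set \<Rightarrow> 'a measure \<Rightarrow> real" where
  "quant_err N r \<Gamma> P = (enn2real (\<integral>\<^sup>+ x. ennreal (ndist_set N x \<Gamma> powr r) \<partial>P)) powr (1 / r)"

text \<open>a^(n) = {a_1,...,a_n} (the sequence is indexed from 1; a 0 is unused).\<close>
definition first_pts :: "(nat \<Rightarrow> 'a) \<Rightarrow> nat \<Rightarrow> 'a set" where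
  "first_pts a n = a ` {1..n}"

definition greedy_seq :: "('a::euclidean_space \<Rightarrow> real) \<Rightarrow> real \<Rightarrow> 'a measure \<Rightarrow> (nat \<Rightarrow> 'a) \<Rightarrow> bool" where
  "greedy_seq N r P a \<longleftrightarrow> (\<forall>n. \<forall>\<xi>.
     quant_err N r (first_pts a n \<union> {a (Suc n)}) P \<le> quant_err N r (first_pts a n \<union> {\<xi>}) P)"

definition msupp :: "('a::euclidean_space \<Rightarrow> real) \<Rightarrow> 'a measure \<Rightarrow> 'a set" where
  "msupp N P = {x. \<forall>t>0. 0 < measure P (nball N x t)}"

definition phi_r :: "real \<Rightarrow> real \<Rightarrow> nat \<Rightarrow> real" where
  "phi_r r u d = (1 / 3 powr r - u powr r) * u ^ d"

end

theory Submission
  imports Defs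
begin


lemma isn_0: "is_norm N \<Longrightarrow> N 0 = 0" unfolding is_norm_def by auto
lemma isn_nonneg: "is_norm N \<Longrightarrow> 0 \<le> N x" unfolding is_norm_def by auto
lemma isn_tri: "is_norm N \<Longrightarrow> N (x + y) \<le> N x + N y" unfolding is_norm_def by auto
lemma isn_scale: "is_norm N \<Longrightarrow> N (c *\<^sub>R x) = \<bar>c\<bar> * N x" unfolding is_norm_def by auto
lemma isn_pos: "is_norm N \<Longrightarrow> x \<noteq> 0 \<Longrightarrow> 0 < N x" unfolding is_norm_def
  by (metis order_le_less)
lemma isn_minus: "is_norm N \<Longrightarrow> N (- x) = N x"
  using isn_scale[of N "-1" x] by simp
lemma isn_commute: "is_norm N \<Longrightarrow> N (x - y) = N (y - x)"
  using isn_minus[of N "x - y"] by simp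
lemma isn_tri_diff: "is_norm N \<Longrightarrow> N (x - z) \<le> N (x - y) + N (y - z)"
  using isn_tri[of N "x - y" "y - z"] by simp

lemma isn_sum: assumes n: "is_norm N" and fin: "finite S" shows "N (sum f S) \<le> (\<Sum>i\<in>S. N (f i))"
  using fin
proof (induction S rule: finite_induct)
  case empty then show ?case by (simp add: isn_0[OF n])
next
  case (insert x F)
  then show ?case using isn_tri[OF n, of "f x" "sum f F"] by simp
qed

lemma isn_upper: assumes "is_norm N" shows "\<exists>C>0. \<forall>x. N x \<le> C * norm x"
proof -
  define C where "C = (\<Sum>b\<in>(Basis::'a set). N b) + 1"
  have "0 \<le> (\<Sum>b\<in>(Basis::'a set). N b)" by (rule sum_nonneg) (simp add: isn_nonneg[OF assms])
  then have C0: "C > 0" unfolding C_def by simp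
  have "N x \<le> C * norm x" for x :: 'a
  proof -
    have "N x = N (\<Sum>b\<in>Basis. (x \<bullet> b) *\<^sub>R b)" by (simp add: euclidean_representation)
    also have "\<dots> \<le> (\<Sum>b\<in>Basis. N ((x \<bullet> b) *\<^sub>R b))" by (rule isn_sum[OF assms]) simp
    also have "\<dots> = (\<Sum>b\<in>Basis. \<bar>x \<bullet> b\<bar> * N b)" using isn_scale[OF assms] by simp
    also have "\<dots> \<le> (\<Sum>b\<in>Basis. norm x * N b)"
      by (intro sum_mono mult_right_mono) (auto simp: Basis_le_norm isn_nonneg[OF assms])
    also have "\<dots> = norm x * (\<Sum>b\<in>Basis. N b)" by (simp add: sum_distrib_left)
    also have "\<dots> \<le> C * norm x" unfolding C_def by (simp add: algebra_simps)
    finally show ?thesis .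
  qed
  with C0 show ?thesis by blast
qed

lemma isn_cont: assumes "is_norm N" shows "continuous_on UNIV N"
proof -
  obtain C where C: "C > 0" "\<And>x. N x \<le> C * norm x" using isn_upper[OF assms] by blast
  have "\<bar>N x - N y\<bar> \<le> C * dist x y" for x y
  proof -
    have "N x \<le> N y + N (x - y)" using isn_tri_diff[OF assms, where x=x and y=y and z=0] by simp
    moreover have "N y \<le> N x + N (x - y)" using isn_tri_diff[OF assms, where x=y and y=x and z=0] isn_commute[OF assms, of x y] by simp
    ultimately show ?thesis using C(2)[of "x - y"] by (simp add: dist_norm)
  qed
  then show ?thesis unfolding continuous_on_iff
    by (metis C(1) dist_real_def divide_pos_pos mult.commute pos_less_divide_eq order_le_less_trans)
qed

lemma isn_borel[measurable]: "is_norm N \<Longrightarrow> N \<in> borel_measurable borel"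
  using isn_cont borel_measurable_continuous_onI by blast

lemma isn_lower: assumes "is_norm N" shows "\<exists>c>0. \<forall>x. c * norm x \<le> N x"
proof -
  have ne: "sphere (0::'a) 1 \<noteq> {}" by simp
  obtain u where u: "u \<in> sphere (0::'a) 1" "\<And>y. y \<in> sphere 0 1 \<Longrightarrow> N u \<le> N y"
    using continuous_attains_inf[OF compact_sphere ne continuous_on_subset[OF isn_cont[OF assms]]] by blast
  have u0: "u \<noteq> 0" using u(1) by auto
  have c: "N u > 0" using isn_pos[OF assms u0] .
  have "N u * norm x \<le> N x" for x
  proof (cases "x = 0")
    case True then show ?thesis by (simp add: isn_0[OF assms])
  next
    case False
    have "N u \<le> N ((1 / norm x) *\<^sub>R x)" using u(2)[of "(1 / norm x) *\<^sub>R x"] False by simp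
    also have "\<dots> = N x / norm x" using isn_scale[OF assms] by simp
    finally show ?thesis using False by (simp add: field_simps)
  qed
  with c show ?thesis by blast
qed

lemma nball_closed: "is_norm N \<Longrightarrow> closed (nball N x t)"
proof -
  assume n: "is_norm N"
  have "continuous_on UNIV (\<lambda>y. N (y - x))"
    by (intro continuous_on_compose2[OF isn_cont[OF n]] continuous_intros) auto
  then have "\<And>y. isCont (\<lambda>y. N (y - x)) y" by (simp add: continuous_on_eq_continuous_at)
  then have "closed ((\<lambda>y. N (y - x)) -` {..t})" by (intro continuous_closed_vimage) auto
  moreover have "nball N x t = (\<lambda>y. N (y - x)) -` {..t}" unfolding nball_def by auto
  ultimately show ?thesis by simp
qed

lemma nball_borel[measurable]: assumes "is_norm N" shows "nball N x t \<in> sets borel"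
  using nball_closed[OF assms] by (simp add: borel_closed)

lemma V_pos: assumes "is_norm N" shows "0 < unit_ball_vol N"
proof -
  obtain C where C: "C > 0" "\<And>x. N x \<le> C * norm x" using isn_upper[OF assms] by blast
  obtain c where c: "c > 0" "\<And>x. c * norm x \<le> N x" using isn_lower[OF assms] by blast
  have sub1: "ball (0::'a) (1/C) \<subseteq> nball N 0 1"
  proof
    fix x :: 'a assume "x \<in> ball 0 (1/C)"
    then have "C * norm x < 1" using C(1) by (simp add: field_simps)
    then show "x \<in> nball N 0 1" unfolding nball_def using C(2)[of x] by simp
  qed
  have sub2: "nball N (0::'a) 1 \<subseteq> cball 0 (1/c)"
  proof
    fix x :: 'a assume "x \<in> nball N 0 1"
    then have "c * norm x \<le> 1" unfolding nball_def using c(2)[of x] by simp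
    then show "x \<in> cball 0 (1/c)" using c(1) by (simp add: field_simps)
  qed
  have bnd: "bounded (nball N (0::'a) 1)" using sub2 bounded_cball bounded_subset by blast
  have fm: "nball N (0::'a) 1 \<in> fmeasurable lborel"
    using emeasure_bounded_finite[OF bnd] nball_borel[OF assms] by (auto simp: fmeasurable_def)
  have "measure lborel (ball (0::'a) (1/C)) \<le> measure lborel (nball N 0 1)"
    by (rule measure_mono_fmeasurable[OF sub1 _ fm]) simp
  moreover have "0 < measure lborel (ball (0::'a) (1/C))"
    using content_ball_pos[of "1/C" "0::'a"] C(1) measure_completion[of "ball (0::'a) (1/C)" lborel]
    by simp
  ultimately show ?thesis unfolding unit_ball_vol_def by linarith
qed



lemma supp_AE:
  fixes N :: "'a::euclidean_space \<Rightarrow> real"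
  assumes n: "is_norm N" and fm: "finite_measure P" and Ps: "sets P = sets borel"
  shows "AE x in P. x \<in> msupp N P"
proof -
  obtain D :: "'a set" where D: "countable D" "\<And>X. open X \<Longrightarrow> X \<noteq> {} \<Longrightarrow> \<exists>d\<in>D. d \<in> X"
    using countable_dense_setE by blast
  define I where "I = {(q, s). q \<in> D \<and> s \<in> \<rat> \<and> measure P (nball N q s) = 0}"
  have cI: "countable I"
  proof -
    have "I \<subseteq> D \<times> \<rat>" unfolding I_def by auto
    moreover have "countable (D \<times> \<rat>)" using D(1) countable_rat by blast
    ultimately show ?thesis using countable_subset by blast
  qed
  have nullI: "(\<lambda>(q, s). nball N q s) i \<in> null_sets P" if "i \<in> I" for i
  proof -
    obtain q s where i1: "i = (q, s)" by (cases i)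
    have i: "i = (q, s)" "measure P (nball N q s) = 0" using that i1 unfolding I_def by auto
    have m: "nball N q s \<in> sets P" using Ps nball_borel[OF n] by simp
    have "emeasure P (nball N q s) = 0"
      using i(2) finite_measure.emeasure_eq_measure[OF fm] by simp
    then show ?thesis using m i(1) by auto
  qed
  have cover: "{x \<in> space P. x \<notin> msupp N P} \<subseteq> (\<Union>i\<in>I. (\<lambda>(q, s). nball N q s) i)"
  proof
    fix x assume "x \<in> {x \<in> space P. x \<notin> msupp N P}"
    then obtain t where t: "t > 0" "\<not> 0 < measure P (nball N x t)" unfolding msupp_def by auto
    then have t0: "measure P (nball N x t) = 0" using measure_nonneg[of P "nball N x t"] by linarith
    have "continuous_on UNIV (\<lambda>y. N (y - x))"
      by (intro continuous_on_compose2[OF isn_cont[OF n]] continuous_intros) auto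
    then have "\<And>y. isCont (\<lambda>y. N (y - x)) y" by (simp add: continuous_on_eq_continuous_at)
    then have "open ((\<lambda>y. N (y - x)) -` {..<t/3})" by (intro continuous_open_vimage) auto
    moreover have "{y. N (y - x) < t/3} = (\<lambda>y. N (y - x)) -` {..<t/3}" by auto
    ultimately have op: "open {y. N (y - x) < t/3}" by simp
    have "x \<in> {y. N (y - x) < t/3}" using t(1) isn_0[OF n] by simp
    then obtain q where q: "q \<in> D" "N (q - x) < t/3" using D(2)[OF op] by blast
    obtain s where s: "s \<in> \<rat>" "t/3 < s" "s < 2*t/3" using Rats_dense_in_real[of "t/3" "2*t/3"] t(1) by auto
    have sub: "nball N q s \<subseteq> nball N x t"
    proof
      fix y assume "y \<in> nball N q s"
      then have "N (y - q) \<le> s" unfolding nball_def by simp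
      then show "y \<in> nball N x t" unfolding nball_def
        using isn_tri_diff[OF n, where x=y and y=q and z=x] q(2) s by simp
    qed
    have "measure P (nball N q s) \<le> measure P (nball N x t)"
      using finite_measure.finite_measure_mono[OF fm sub] Ps nball_borel[OF n] by simp
    then have "measure P (nball N q s) = 0" using t0 measure_nonneg[of P "nball N q s"] by linarith
    then have "(q, s) \<in> I" unfolding I_def using q s by auto
    moreover have "x \<in> nball N q s" unfolding nball_def using isn_commute[OF n, of x q] q(2) s by simp
    ultimately show "x \<in> (\<Union>i\<in>I. (\<lambda>(q, s). nball N q s) i)" by force
  qed
  show ?thesis
    by (rule AE_I'[OF null_sets_UN'[OF cI nullI] cover])
qed

lemma bern_aux:
  fixes s \<delta> :: real assumes "0 \<le> s" "s < 1" "0 < \<delta>"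
  shows "1 + \<delta> * s \<le> (1 - s) powr (- \<delta>)"
proof -
  have "ln (1 - s) \<le> - s" using ln_le_minus_one[of "1 - s"] assms by simp
  then have "\<delta> * s \<le> \<delta> * (- ln (1 - s))" using assms(3) mult_left_mono[of "s" "- ln (1 - s)" \<delta>] by simp
  then have "1 + \<delta> * s \<le> exp (- \<delta> * ln (1 - s))" using exp_ge_add_one_self[of "- \<delta> * ln (1 - s)"] by linarith
  also have "\<dots> = (1 - s) powr (- \<delta>)" using assms by (simp add: powr_def)
  finally show ?thesis .
qed

lemma discrete_rate:
  fixes E :: "nat \<Rightarrow> real" and k \<delta> :: real
  assumes nn: "\<And>n. n \<ge> 1 \<Longrightarrow> 0 \<le> E n"
    and step: "\<And>n. n \<ge> 1 \<Longrightarrow> E (Suc n) \<le> E n - k * E n powr (1 + \<delta>)"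
    and k: "0 < k" and d: "0 < \<delta>"
  shows "n \<ge> 2 \<Longrightarrow> E n \<le> (\<delta> * k * (real n - 1)) powr (- 1 / \<delta>)"
proof -
  have claim: "E n = 0 \<or> \<delta> * k * (real n - 1) \<le> E n powr (- \<delta>)" if "n \<ge> 1" for n
    using that
  proof (induction n rule: dec_induct)
    case base then show ?case by simp
  next
    case (step m)
    show ?case
    proof (cases "E (Suc m) = 0")
      case True then show ?thesis by simp
    next
      case False
      have m1: "1 \<le> m" using step(1) .
      have Em: "0 \<le> E m" using nn[OF m1] .
      have pos1: "0 < E (Suc m)" using False nn[of "Suc m"] by simp
      have st: "E (Suc m) \<le> E m - k * E m powr (1 + \<delta>)" using assms(2)[OF m1] .
      have "0 \<le> k * E m powr (1 + \<delta>)" using k by simp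
      then have Empos: "0 < E m" using pos1 st by linarith
      define s where "s = k * E m powr \<delta>"
      have s0: "0 \<le> s" unfolding s_def using k by simp
      have "E m powr (1 + \<delta>) = E m * E m powr \<delta>" using Empos by (simp add: powr_add)
      then have st2: "E (Suc m) \<le> E m * (1 - s)" using st unfolding s_def by (simp add: algebra_simps)
      then have "0 < E m * (1 - s)" using pos1 by linarith
      then have s1: "s < 1" using Empos by (simp add: zero_less_mult_iff)
      have A1: "(E m * (1 - s)) powr (- \<delta>) \<le> E (Suc m) powr (- \<delta>)"
        using powr_mono2'[of "- \<delta>" "E (Suc m)" "E m * (1 - s)"] d pos1 st2 \<open>0 < E m * (1 - s)\<close> by simp
      have A2: "(E m * (1 - s)) powr (- \<delta>) = E m powr (- \<delta>) * (1 - s) powr (- \<delta>)"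
        using Empos s1 by (simp add: powr_mult)
      have A3: "E m powr (- \<delta>) * (1 + \<delta> * s) \<le> E m powr (- \<delta>) * (1 - s) powr (- \<delta>)"
        using bern_aux[OF s0 s1 d] by (simp add: mult_left_mono)
      have A4: "E m powr (- \<delta>) * (1 + \<delta> * s) = E m powr (- \<delta>) + \<delta> * k"
      proof -
        have "E m powr (- \<delta>) * E m powr \<delta> = 1" using Empos by (simp add: powr_add[symmetric])
        then show ?thesis unfolding s_def by (simp add: algebra_simps)
      qed
      have A5: "\<delta> * k * (real m - 1) \<le> E m powr (- \<delta>)" using step(3) Empos by auto
      have A6: "\<delta> * k * (real (Suc m) - 1) = \<delta> * k * (real m - 1) + \<delta> * k" by (simp add: algebra_simps)
      have "\<delta> * k * (real (Suc m) - 1) \<le> E (Suc m) powr (- \<delta>)"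
        using A1 A2 A3 A4 A5 A6 by linarith
      then show ?thesis by simp
    qed
  qed
  assume n2: "n \<ge> 2"
  have pos: "0 < \<delta> * k * (real n - 1)" using n2 d k by simp
  have "E n = 0 \<or> \<delta> * k * (real n - 1) \<le> E n powr (- \<delta>)" using claim[of n] n2 by simp
  then show ?thesis
  proof
    assume "E n = 0" then show ?thesis by simp
  next
    assume h: "\<delta> * k * (real n - 1) \<le> E n powr (- \<delta>)"
    have En: "0 \<le> E n" using nn n2 by simp
    then have "E n \<noteq> 0" using h pos by auto
    then have Enp: "0 < E n" using En by simp
    have "(E n powr (- \<delta>)) powr (- 1 / \<delta>) \<le> (\<delta> * k * (real n - 1)) powr (- 1 / \<delta>)"
      using powr_mono2'[OF _ pos h] d by simp
    moreover have "(E n powr (- \<delta>)) powr (- 1 / \<delta>) = E n" using Enp d by (simp add: powr_powr)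
    ultimately show ?thesis by simp
  qed
qed



lemma nd_le: "finite \<Gamma> \<Longrightarrow> b \<in> \<Gamma> \<Longrightarrow> ndist_set N x \<Gamma> \<le> N (x - b)"
  unfolding ndist_set_def by (rule Min_le) auto

lemma nd_nonneg: "is_norm N \<Longrightarrow> finite \<Gamma> \<Longrightarrow> \<Gamma> \<noteq> {} \<Longrightarrow> 0 \<le> ndist_set N x \<Gamma>"
  unfolding ndist_set_def using isn_nonneg by (subst Min_ge_iff) auto

lemma nd_insert: "finite \<Gamma> \<Longrightarrow> \<Gamma> \<noteq> {} \<Longrightarrow> ndist_set N x (\<Gamma> \<union> {y}) = min (ndist_set N x \<Gamma>) (N (x - y))"
  unfolding ndist_set_def by (simp add: min.commute)

lemma nd_meas[measurable]: "is_norm N \<Longrightarrow> finite \<Gamma> \<Longrightarrow> (\<lambda>x. ndist_set N x \<Gamma>) \<in> borel_measurable borel"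
  unfolding ndist_set_def by (rule borel_measurable_Min) (auto intro!: measurable_compose[OF _ isn_borel])

lemma powr_sum_le: fixes u v r :: real assumes "0 \<le> u" "0 \<le> v" "0 < r"
  shows "(u + v) powr r \<le> 2 powr r * (u powr r + v powr r)"
proof -
  have "(u + v) powr r \<le> (2 * max u v) powr r" using assms by (intro powr_mono2) auto
  also have "\<dots> = 2 powr r * max u v powr r" using assms by (simp add: powr_mult)
  also have "\<dots> \<le> 2 powr r * (u powr r + v powr r)"
    by (intro mult_left_mono) (auto simp: max_def)
  finally show ?thesis .
qed

lemma powr_inv_le: fixes u v r :: real assumes "0 \<le> u" "0 \<le> v" "0 < r" "u powr (1/r) \<le> v powr (1/r)"
  shows "u \<le> v"
proof (rule ccontr)
  assume "\<not> u \<le> v"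
  then have "v powr (1/r) < u powr (1/r)" using assms by (intro powr_less_mono2) auto
  then show False using assms(4) by simp
qed

locale setting =
  fixes N :: "'a::euclidean_space \<Rightarrow> real"
    and r \<epsilon> :: real
    and P \<nu> :: "'a measure"
    and a :: "nat \<Rightarrow> 'a"
    and g :: "'a \<Rightarrow> real"
  assumes norm: "is_norm N"
    and r_pos: "0 < r"
    and P_prob: "prob_space P" and P_borel: "sets P = sets borel"
    and moment: "(\<integral>\<^sup>+ x. ennreal (N x powr r) \<partial>P) < \<infinity>"
    and greedy: "greedy_seq N r P a"
    and eps: "0 < \<epsilon>" "\<epsilon> < 1/3"
    and nu_prob: "prob_space \<nu>" and nu_borel: "sets \<nu> = sets borel"
    and g_meas: "g \<in> borel_measurable borel" and g_nonneg: "\<And>x. 0 \<le> g x"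
    and g_bound: "\<And>x t. x \<in> msupp N P \<Longrightarrow> 0 \<le> t \<Longrightarrow> t \<le> \<epsilon> * N (x - a 1) \<Longrightarrow>
        g x * unit_ball_vol N * t ^ DIM('a) \<le> measure \<nu> (nball N x t)"
    and int_fin: "(\<integral>\<^sup>+ x. (if g x = 0 then \<infinity> else ennreal (g x powr (- r / DIM('a)))) \<partial>P) < \<infinity>"
begin

interpretation P: prob_space P by (rule P_prob)
interpretation nu: prob_space \<nu> by (rule nu_prob)
interpretation PN: pair_sigma_finite P \<nu> by unfold_locales

lemma measP: fixes f :: "'a \<Rightarrow> 'b::topological_space"
  shows "f \<in> borel_measurable borel \<Longrightarrow> f \<in> borel_measurable P"
proof -
  have "measurable P (borel :: 'b measure) = measurable borel borel"
    by (rule measurable_cong_sets[OF P_borel refl])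
  then show "f \<in> borel_measurable borel \<Longrightarrow> f \<in> borel_measurable P" by simp
qed

lemma measPN: fixes f :: "'a \<times> 'a \<Rightarrow> 'b::topological_space"
  shows "f \<in> borel_measurable (borel \<Otimes>\<^sub>M borel) \<Longrightarrow> f \<in> borel_measurable (P \<Otimes>\<^sub>M \<nu>)"
proof -
  have "measurable (P \<Otimes>\<^sub>M \<nu>) (borel :: 'b measure) = measurable (borel \<Otimes>\<^sub>M borel) borel"
    by (rule measurable_cong_sets[OF sets_pair_measure_cong[OF P_borel nu_borel] refl])
  then show "f \<in> borel_measurable (borel \<Otimes>\<^sub>M borel) \<Longrightarrow> f \<in> borel_measurable (P \<Otimes>\<^sub>M \<nu>)" by simp
qed

lemma spaceP: "space P = UNIV" using sets_eq_imp_space_eq[OF P_borel] by simp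
lemma spacenu: "space \<nu> = UNIV" using sets_eq_imp_space_eq[OF nu_borel] by simp

lemma Nr_int: "integrable P (\<lambda>x. N x powr r)"
proof (rule integrableI_bounded)
  show "(\<lambda>x. N x powr r) \<in> borel_measurable P" by (rule measP) (measurable, rule norm)
  show "(\<integral>\<^sup>+ x. ennreal (norm (N x powr r)) \<partial>P) < \<infinity>" using moment by simp
qed

lemma nd_int:
  assumes fin: "finite \<Gamma>" and b: "b \<in> \<Gamma>"
  shows "integrable P (\<lambda>x. ndist_set N x \<Gamma> powr r)"
    and "quant_err N r \<Gamma> P = (\<integral>x. ndist_set N x \<Gamma> powr r \<partial>P) powr (1/r)"
proof -
  have ne: "\<Gamma> \<noteq> {}" using b by auto
  have m: "(\<lambda>x. ndist_set N x \<Gamma> powr r) \<in> borel_measurable P"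
    by (rule measP) (measurable, auto intro: norm fin)
  have bnd: "ndist_set N x \<Gamma> powr r \<le> 2 powr r * (N x powr r + N b powr r)" for x
  proof -
    have "ndist_set N x \<Gamma> \<le> N x + N b"
      using nd_le[OF fin b, of N x] isn_tri_diff[OF norm, where x=x and y=0 and z=b] isn_minus[OF norm, of b] by simp
    then have "ndist_set N x \<Gamma> powr r \<le> (N x + N b) powr r"
      using nd_nonneg[OF norm fin ne] r_pos by (intro powr_mono2) auto
    also have "\<dots> \<le> 2 powr r * (N x powr r + N b powr r)"
      using powr_sum_le isn_nonneg[OF norm] r_pos by blast
    finally show ?thesis .
  qed
  show int: "integrable P (\<lambda>x. ndist_set N x \<Gamma> powr r)"
  proof (rule Bochner_Integration.integrable_bound[OF _ m])
    show "integrable P (\<lambda>x. 2 powr r * (N x powr r + N b powr r))"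
      using Nr_int by auto
    show "AE x in P. norm (ndist_set N x \<Gamma> powr r) \<le> norm (2 powr r * (N x powr r + N b powr r))"
      using bnd by (auto intro!: AE_I2 simp: abs_of_nonneg isn_nonneg[OF norm] add_nonneg_nonneg)
  qed
  have "(\<integral>\<^sup>+ x. ennreal (ndist_set N x \<Gamma> powr r) \<partial>P) = ennreal (\<integral>x. ndist_set N x \<Gamma> powr r \<partial>P)"
    by (rule nn_integral_eq_integral[OF int]) simp
  moreover have "0 \<le> (\<integral>x. ndist_set N x \<Gamma> powr r \<partial>P)" by (rule integral_nonneg_AE) simp
  ultimately show "quant_err N r \<Gamma> P = (\<integral>x. ndist_set N x \<Gamma> powr r \<partial>P) powr (1/r)"
    unfolding quant_err_def by simp
qed


definition "D n x = ndist_set N x (first_pts a n)"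
definition "E n = (\<integral>x. D n x powr r \<partial>P)"
definition "A n = (\<integral>x. g x * (D n x powr r * D n x ^ DIM('a)) \<partial>P)"
definition "cc = phi_r r \<epsilon> DIM('a) * unit_ball_vol N"

lemma fp_fin: "finite (first_pts a n)" unfolding first_pts_def by simp
lemma fp_a1: "n \<ge> 1 \<Longrightarrow> a 1 \<in> first_pts a n" unfolding first_pts_def by simp
lemma fp_Suc: "first_pts a (Suc n) = first_pts a n \<union> {a (Suc n)}"
  unfolding first_pts_def by (simp add: atLeastAtMostSuc_conv image_Un)

lemma D_meas[measurable]: "D n \<in> borel_measurable borel"
  unfolding D_def[abs_def] by (rule nd_meas[OF norm fp_fin])

lemma D_nonneg: "n \<ge> 1 \<Longrightarrow> 0 \<le> D n x"
  unfolding D_def using fp_a1 by (intro nd_nonneg[OF norm fp_fin]) auto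

lemma D_le: "n \<ge> 1 \<Longrightarrow> D n x \<le> N (x - a 1)"
  unfolding D_def using fp_a1 by (intro nd_le[OF fp_fin]) auto

lemma D_int: "n \<ge> 1 \<Longrightarrow> integrable P (\<lambda>x. D n x powr r)"
  unfolding D_def using nd_int(1)[OF fp_fin fp_a1] by simp

lemma E_nonneg: "n \<ge> 1 \<Longrightarrow> 0 \<le> E n"
  unfolding E_def by (rule integral_nonneg_AE) simp

lemma qerr_E: "n \<ge> 1 \<Longrightarrow> quant_err N r (first_pts a n) P = E n powr (1/r)"
  unfolding E_def D_def using nd_int(2)[OF fp_fin fp_a1] by simp

lemma phi_pos: "0 < phi_r r \<epsilon> DIM('a)"
proof -
  have "\<epsilon> powr r < (1/3) powr r" using eps r_pos by (intro powr_less_mono2) auto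
  then have "\<epsilon> powr r < 1 / 3 powr r" by (simp add: powr_divide)
  then show ?thesis unfolding phi_r_def using eps by simp
qed

lemma cc_pos: "0 < cc" unfolding cc_def using phi_pos V_pos[OF norm] by simp

lemma supp_AE': "AE x in P. x \<in> msupp N P"
  by (rule supp_AE[OF norm P.finite_measure_axioms P_borel])

lemma pointwise:
  assumes n1: "n \<ge> 1" and xs: "x \<in> msupp N P"
  shows "(\<integral>\<^sup>+ y. ennreal (min (D n x) (N (x - y)) powr r) \<partial>\<nu>)
           \<le> ennreal (D n x powr r - cc * (g x * (D n x powr r * D n x ^ DIM('a))))"
    and "0 \<le> cc * (g x * (D n x powr r * D n x ^ DIM('a)))"
    and "cc * (g x * (D n x powr r * D n x ^ DIM('a))) \<le> D n x powr r"
proof -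
  define \<delta> where "\<delta> = D n x"
  have d0: "0 \<le> \<delta>" unfolding \<delta>_def using D_nonneg[OF n1] .
  define B where "B = nball N x (\<epsilon> * \<delta>)"
  have Bm: "B \<in> sets \<nu>" unfolding B_def using nu_borel nball_borel[OF norm] by simp
  define k where "k = (1 - \<epsilon> powr r) * \<delta> powr r"
  have er1: "\<epsilon> powr r \<le> 1" using eps r_pos by (intro powr_le1) auto
  have k0: "0 \<le> k" "k \<le> \<delta> powr r" unfolding k_def using er1 mult_nonneg_nonneg[of "\<epsilon> powr r" "\<delta> powr r"] mult_left_mono[OF er1, of "\<delta> powr r"]
    by (auto simp: algebra_simps)
  have pw: "min \<delta> (N (x - y)) powr r \<le> \<delta> powr r - k * indicator B y" for y
  proof (cases "y \<in> B")
    case True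
    then have "N (x - y) \<le> \<epsilon> * \<delta>" unfolding B_def nball_def using isn_commute[OF norm, of x y] by simp
    then have "min \<delta> (N (x - y)) \<le> \<epsilon> * \<delta>" by simp
    then have "min \<delta> (N (x - y)) powr r \<le> (\<epsilon> * \<delta>) powr r"
      using r_pos d0 isn_nonneg[OF norm] by (intro powr_mono2) auto
    also have "\<dots> = \<epsilon> powr r * \<delta> powr r" using eps d0 by (simp add: powr_mult)
    finally show ?thesis using True unfolding k_def by (simp add: algebra_simps)
  next
    case False
    have "min \<delta> (N (x - y)) powr r \<le> \<delta> powr r"
      using r_pos d0 isn_nonneg[OF norm] by (intro powr_mono2) auto
    then show ?thesis using False by simp
  qed
  have intB: "integrable \<nu> (\<lambda>y. \<delta> powr r - k * indicator B y)"
    using Bm by (intro Bochner_Integration.integrable_diff integrable_mult_right integrable_real_indicator)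
      (auto simp: less_top[symmetric])
  have "(\<integral>\<^sup>+ y. ennreal (min \<delta> (N (x - y)) powr r) \<partial>\<nu>) \<le> (\<integral>\<^sup>+ y. ennreal (\<delta> powr r - k * indicator B y) \<partial>\<nu>)"
    by (intro nn_integral_mono ennreal_leI pw)
  also have "\<dots> = ennreal (\<integral>y. \<delta> powr r - k * indicator B y \<partial>\<nu>)"
    using k0 by (intro nn_integral_eq_integral[OF intB] AE_I2) (auto simp: indicator_def)
  also have "(\<integral>y. \<delta> powr r - k * indicator B y \<partial>\<nu>) = \<delta> powr r - k * measure \<nu> B"
  proof -
    have i1: "integrable \<nu> (\<lambda>y. k * indicator B y :: real)"
      using Bm by (intro integrable_mult_right integrable_real_indicator) (auto simp: less_top[symmetric])
    have "(\<integral>y. \<delta> powr r - k * indicator B y \<partial>\<nu>) = (\<integral>y. \<delta> powr r \<partial>\<nu>) - (\<integral>y. k * indicator B y \<partial>\<nu>)"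
      by (rule Bochner_Integration.integral_diff[OF _ i1]) simp
    also have "\<dots> = \<delta> powr r - k * measure \<nu> B"
      using Bm spacenu nu.prob_space by simp
    finally show ?thesis .
  qed
  finally have I1: "(\<integral>\<^sup>+ y. ennreal (min \<delta> (N (x - y)) powr r) \<partial>\<nu>) \<le> ennreal (\<delta> powr r - k * measure \<nu> B)" .
  have gb: "g x * unit_ball_vol N * (\<epsilon> * \<delta>) ^ DIM('a) \<le> measure \<nu> B"
    unfolding B_def
  proof (rule g_bound[OF xs])
    show "0 \<le> \<epsilon> * \<delta>" using eps d0 by simp
    show "\<epsilon> * \<delta> \<le> \<epsilon> * N (x - a 1)" using eps D_le[OF n1, of x] unfolding \<delta>_def by simp
  qed
  define Q where "Q = g x * unit_ball_vol N * (\<epsilon> * \<delta>) ^ DIM('a)"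
  have Q0: "0 \<le> Q" unfolding Q_def using g_nonneg V_pos[OF norm] eps d0 by simp
  have eq: "cc * (g x * (\<delta> powr r * \<delta> ^ DIM('a))) = (1 / 3 powr r - \<epsilon> powr r) * \<delta> powr r * Q"
    unfolding cc_def phi_r_def Q_def by (simp add: power_mult_distrib algebra_simps)
  have c1: "0 \<le> 1 / 3 powr r - \<epsilon> powr r" using phi_pos eps unfolding phi_r_def
    by (simp add: zero_less_mult_iff)
  have c2: "1 / 3 powr r - \<epsilon> powr r \<le> 1 - \<epsilon> powr r"
  proof -
    have "1 \<le> 3 powr r" using r_pos by (intro ge_one_powr_ge_zero) auto
    then show ?thesis by (simp add: divide_le_eq)
  qed
  have mB1: "measure \<nu> B \<le> 1" by (rule nu.prob_le_1)
  have "(1 / 3 powr r - \<epsilon> powr r) * \<delta> powr r * Q \<le> (1 - \<epsilon> powr r) * \<delta> powr r * measure \<nu> B"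
    using c1 c2 Q0 gb er1 k0 unfolding Q_def[symmetric] k_def by (intro mult_mono) auto
  then have L: "cc * (g x * (\<delta> powr r * \<delta> ^ DIM('a))) \<le> k * measure \<nu> B"
    unfolding eq k_def by (simp add: algebra_simps)
  show "0 \<le> cc * (g x * (D n x powr r * D n x ^ DIM('a)))"
    using cc_pos g_nonneg d0 unfolding \<delta>_def by simp
  show "cc * (g x * (D n x powr r * D n x ^ DIM('a))) \<le> D n x powr r"
    using L k0 mB1 mult_left_mono[OF mB1 k0(1)] unfolding \<delta>_def[symmetric] by linarith
  have "ennreal (\<delta> powr r - k * measure \<nu> B) \<le> ennreal (\<delta> powr r - cc * (g x * (\<delta> powr r * \<delta> ^ DIM('a))))"
    using L by (intro ennreal_leI) linarith
  with I1 show "(\<integral>\<^sup>+ y. ennreal (min (D n x) (N (x - y)) powr r) \<partial>\<nu>)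
           \<le> ennreal (D n x powr r - cc * (g x * (D n x powr r * D n x ^ DIM('a))))"
    unfolding \<delta>_def by simp
qed


lemma GD_meas[measurable]: "(\<lambda>x. g x * (D n x powr r * D n x ^ DIM('a))) \<in> borel_measurable borel"
  using g_meas by measurable

lemma A_int: assumes n1: "n \<ge> 1" shows "integrable P (\<lambda>x. g x * (D n x powr r * D n x ^ DIM('a)))"
proof (rule Bochner_Integration.integrable_bound[OF _ measP[OF GD_meas]])
  show "integrable P (\<lambda>x. D n x powr r / cc)" using D_int[OF n1] by simp
  show "AE x in P. norm (g x * (D n x powr r * D n x ^ DIM('a))) \<le> norm (D n x powr r / cc)"
    using supp_AE'
  proof eventually_elim
    case (elim x)
    have "0 \<le> cc * (g x * (D n x powr r * D n x ^ DIM('a)))"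
         "cc * (g x * (D n x powr r * D n x ^ DIM('a))) \<le> D n x powr r"
      using pointwise(2,3)[OF n1 elim] by auto
    then show ?case using cc_pos g_nonneg D_nonneg[OF n1, of x]
      by (simp add: abs_of_nonneg pos_le_divide_eq mult.commute)
  qed
qed

lemma A_nonneg: "n \<ge> 1 \<Longrightarrow> 0 \<le> A n"
  unfolding A_def using g_nonneg D_nonneg by (intro integral_nonneg_AE AE_I2) auto

lemma step:
  assumes n1: "n \<ge> 1"
  shows "E (Suc n) \<le> E n - cc * A n"
proof -
  have fin: "finite (first_pts a n)" by (rule fp_fin)
  have ne: "first_pts a n \<noteq> {}" using fp_a1[OF n1] by auto
  define F where "F y = (\<integral>x. ndist_set N x (first_pts a n \<union> {y}) powr r \<partial>P)" for y
  have a1y: "a 1 \<in> first_pts a n \<union> {y}" for y using fp_a1[OF n1] by simp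
  have finy: "finite (first_pts a n \<union> {y})" for y using fin by simp
  have nd_ins: "ndist_set N x (first_pts a n \<union> {y}) = min (D n x) (N (x - y))" for x y
    unfolding D_def by (rule nd_insert[OF fin ne])
  have nd_ins': "ndist_set N x (insert y (first_pts a n)) = min (D n x) (N (x - y))" for x y
    using nd_ins[of x y] by simp
  have EF: "E (Suc n) \<le> F y" for y
  proof -
    have "quant_err N r (first_pts a n \<union> {a (Suc n)}) P \<le> quant_err N r (first_pts a n \<union> {y}) P"
      using greedy unfolding greedy_seq_def by (rule allE) (erule allE)
    moreover have "quant_err N r (first_pts a n \<union> {a (Suc n)}) P = E (Suc n) powr (1/r)"
      using qerr_E[of "Suc n"] fp_Suc[of n] by simp
    moreover have "quant_err N r (first_pts a n \<union> {y}) P = F y powr (1/r)"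
      unfolding F_def by (rule nd_int(2)[OF finy a1y])
    ultimately have "E (Suc n) powr (1/r) \<le> F y powr (1/r)" by simp
    moreover have "0 \<le> F y" unfolding F_def by (rule integral_nonneg_AE) simp
    ultimately show ?thesis using powr_inv_le[OF E_nonneg[of "Suc n"] _ r_pos] by simp
  qed
  have Fnn: "ennreal (F y) = (\<integral>\<^sup>+ x. ennreal (min (D n x) (N (x - y)) powr r) \<partial>P)" for y
  proof -
    have "(\<integral>\<^sup>+ x. ennreal (ndist_set N x (first_pts a n \<union> {y}) powr r) \<partial>P) = ennreal (F y)"
      unfolding F_def by (rule nn_integral_eq_integral[OF nd_int(1)[OF finy a1y]]) simp
    then show ?thesis by (simp add: nd_ins')
  qed
  have jm: "(\<lambda>(x, y). ennreal (min (D n x) (N (x - y)) powr r)) \<in> borel_measurable (P \<Otimes>\<^sub>M \<nu>)"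
  proof -
    have f1: "(\<lambda>z::'a\<times>'a. fst z - snd z) \<in> borel_measurable (borel \<Otimes>\<^sub>M borel)"
      unfolding borel_prod by (intro borel_measurable_continuous_onI continuous_intros)
    have f2: "(\<lambda>z::'a\<times>'a. D n (fst z)) \<in> borel_measurable (borel \<Otimes>\<^sub>M borel)"
      by (rule measurable_compose[OF measurable_fst D_meas])
    have f3: "(\<lambda>z::'a\<times>'a. N (fst z - snd z)) \<in> borel_measurable (borel \<Otimes>\<^sub>M borel)"
      by (rule measurable_compose[OF f1 isn_borel[OF norm]])
    have "(\<lambda>z::'a\<times>'a. ennreal (min (D n (fst z)) (N (fst z - snd z)) powr r)) \<in> borel_measurable (borel \<Otimes>\<^sub>M borel)"
      using f2 f3 by measurable
    then show ?thesis by (intro measPN) (simp add: case_prod_beta')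
  qed
  have "ennreal (E (Suc n)) = (\<integral>\<^sup>+ y. ennreal (E (Suc n)) \<partial>\<nu>)"
    using nu.emeasure_space_1 by simp
  also have "\<dots> \<le> (\<integral>\<^sup>+ y. ennreal (F y) \<partial>\<nu>)"
    by (intro nn_integral_mono ennreal_leI EF)
  also have "\<dots> = (\<integral>\<^sup>+ y. (\<integral>\<^sup>+ x. ennreal (min (D n x) (N (x - y)) powr r) \<partial>P) \<partial>\<nu>)"
    by (simp add: Fnn)
  also have "\<dots> = (\<integral>\<^sup>+ x. (\<integral>\<^sup>+ y. ennreal (min (D n x) (N (x - y)) powr r) \<partial>\<nu>) \<partial>P)"
    by (rule PN.Fubini'[OF jm])
  also have "\<dots> \<le> (\<integral>\<^sup>+ x. ennreal (D n x powr r - cc * (g x * (D n x powr r * D n x ^ DIM('a)))) \<partial>P)"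
  proof (rule nn_integral_mono_AE)
    show "AE x in P. (\<integral>\<^sup>+ y. ennreal (min (D n x) (N (x - y)) powr r) \<partial>\<nu>)
           \<le> ennreal (D n x powr r - cc * (g x * (D n x powr r * D n x ^ DIM('a))))"
      using supp_AE' by eventually_elim (rule pointwise(1)[OF n1])
  qed
  also have "\<dots> = ennreal (\<integral>x. D n x powr r - cc * (g x * (D n x powr r * D n x ^ DIM('a))) \<partial>P)"
  proof (rule nn_integral_eq_integral)
    show "integrable P (\<lambda>x. D n x powr r - cc * (g x * (D n x powr r * D n x ^ DIM('a))))"
      using D_int[OF n1] A_int[OF n1] by auto
    show "AE x in P. 0 \<le> D n x powr r - cc * (g x * (D n x powr r * D n x ^ DIM('a)))"
      using supp_AE' proof eventually_elim
      case (elim x) then show ?case using pointwise(3)[OF n1 elim] by linarith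
    qed
  qed
  also have "(\<integral>x. D n x powr r - cc * (g x * (D n x powr r * D n x ^ DIM('a))) \<partial>P) = E n - cc * A n"
    unfolding E_def A_def using D_int[OF n1] A_int[OF n1] by simp
  finally have "ennreal (E (Suc n)) \<le> ennreal (E n - cc * A n)" .
  moreover have "0 \<le> E n - cc * A n"
  proof -
    have "0 \<le> (\<integral>x. D n x powr r - cc * (g x * (D n x powr r * D n x ^ DIM('a))) \<partial>P)"
    proof (rule integral_nonneg_AE)
      show "AE x in P. 0 \<le> D n x powr r - cc * (g x * (D n x powr r * D n x ^ DIM('a)))"
        using supp_AE' proof eventually_elim
        case (elim x) then show ?case using pointwise(3)[OF n1 elim] by linarith
      qed
    qed
    then show ?thesis unfolding E_def A_def using D_int[OF n1] A_int[OF n1] by simp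
  qed
  ultimately show ?thesis by (simp add: ennreal_le_iff)
qed


definition "G = (\<integral>x. g x powr (- r / DIM('a)) \<partial>P)"

lemma g_pos_AE: "AE x in P. 0 < g x"
proof -
  have "AE x in P. (if g x = 0 then \<infinity> else ennreal (g x powr (- r / DIM('a)))) \<noteq> \<infinity>"
  proof (rule nn_integral_PInf_AE)
    show "(\<lambda>x. if g x = 0 then \<infinity> else ennreal (g x powr (- r / DIM('a)))) \<in> borel_measurable P"
      by (rule measP) (use g_meas in measurable)
    show "(\<integral>\<^sup>+ x. (if g x = 0 then \<infinity> else ennreal (g x powr (- r / DIM('a)))) \<partial>P) \<noteq> \<infinity>"
      using int_fin by simp
  qed
  then show ?thesis
  proof eventually_elim
    case (elim x)
    then have "g x \<noteq> 0" by (auto split: if_splits)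
    then show ?case using g_nonneg[of x] by linarith
  qed
qed

lemma G_props:
  shows "integrable P (\<lambda>x. g x powr (- r / DIM('a)))"
    and "enn2real (\<integral>\<^sup>+ x. (if g x = 0 then \<infinity> else ennreal (g x powr (- r / DIM('a)))) \<partial>P) = G"
    and "0 < G"
proof -
  have eq: "(\<integral>\<^sup>+ x. (if g x = 0 then \<infinity> else ennreal (g x powr (- r / DIM('a)))) \<partial>P)
      = (\<integral>\<^sup>+ x. ennreal (g x powr (- r / DIM('a))) \<partial>P)"
    using g_pos_AE by (intro nn_integral_cong_AE) (auto elim!: eventually_mono)
  have m: "(\<lambda>x. g x powr (- r / DIM('a))) \<in> borel_measurable P"
    by (rule measP) (use g_meas in measurable)
  show int: "integrable P (\<lambda>x. g x powr (- r / DIM('a)))"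
    by (rule integrableI_bounded[OF m]) (use int_fin eq in simp)
  have "(\<integral>\<^sup>+ x. ennreal (g x powr (- r / DIM('a))) \<partial>P) = ennreal G"
    unfolding G_def by (rule nn_integral_eq_integral[OF int]) simp
  moreover have G0: "0 \<le> G" unfolding G_def by (rule integral_nonneg_AE) simp
  ultimately show "enn2real (\<integral>\<^sup>+ x. (if g x = 0 then \<infinity> else ennreal (g x powr (- r / DIM('a)))) \<partial>P) = G"
    using eq by simp
  show "0 < G"
  proof (rule ccontr)
    assume "\<not> 0 < G"
    then have "G = 0" using G0 by simp
    then have "AE x in P. g x powr (- r / DIM('a)) = 0"
      using integral_nonneg_eq_0_iff_AE[OF int] unfolding G_def by simp
    then have "AE x in P. False" using g_pos_AE by eventually_elim simp
    then show False using P.AE_False by simp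
  qed
qed

lemma holder:
  assumes n1: "n \<ge> 1"
  shows "E n \<le> A n powr (r / (r + DIM('a))) * G powr (DIM('a) / (r + DIM('a)))"
proof -
  define dd where "dd = real DIM('a)"
  have dd0: "0 < dd" unfolding dd_def by simp
  define p where "p = r / (r + dd)"
  define q where "q = dd / (r + dd)"
  have p0: "0 < p" "0 < q" "p + q = 1" unfolding p_def q_def using r_pos dd0 by (auto simp: add_divide_distrib[symmetric])
  have Gp: "0 < G" by (rule G_props(3))
  show ?thesis
  proof (cases "A n = 0")
    case True
    have "AE x in P. g x * (D n x powr r * D n x ^ DIM('a)) = 0"
      using True integral_nonneg_eq_0_iff_AE[OF A_int[OF n1]] g_nonneg D_nonneg[OF n1] unfolding A_def by simp
    then have "AE x in P. D n x powr r = 0"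
      using g_pos_AE by eventually_elim auto
    then have "E n = 0" unfolding E_def by (rule integral_eq_zero_AE)
    then show ?thesis by simp
  next
    case False
    then have Ap: "0 < A n" using A_nonneg[OF n1] by simp
    define X where "X x = g x * (D n x powr r * D n x ^ DIM('a))" for x
    define Y where "Y x = g x powr (- r / DIM('a))" for x
    have pw: "AE x in P. D n x powr r \<le> (p * X x / A n + q * Y x / G) * (A n powr p * G powr q)"
      using g_pos_AE
    proof eventually_elim
      case (elim x)
      have Dn: "0 \<le> D n x" by (rule D_nonneg[OF n1])
      have X0: "0 \<le> X x" unfolding X_def using g_nonneg Dn by simp
      have Y0: "0 \<le> Y x" unfolding Y_def by simp
      have rhs0: "0 \<le> (p * X x / A n + q * Y x / G) * (A n powr p * G powr q)"
        using X0 Y0 p0 Ap Gp by simp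
      show ?case
      proof (cases "D n x = 0")
        case True then show ?thesis using rhs0 by simp
      next
        case False
        then have Dp: "0 < D n x" using Dn by simp
        have Xe: "X x = g x * D n x powr (r + dd)"
          unfolding X_def dd_def using Dp by (simp add: powr_add powr_realpow)
        have Xp: "0 < X x" unfolding Xe using elim Dp by simp
        have Yp: "0 < Y x" unfolding Y_def using elim by simp
        have XY: "X x powr p * Y x powr q = D n x powr r"
        proof -
          have "X x powr p = g x powr p * D n x powr r"
            unfolding Xe p_def using elim Dp r_pos dd0 by (simp add: powr_mult powr_powr)
          moreover have "Y x powr q = g x powr (- p)"
            unfolding Y_def p_def q_def dd_def using elim dd0 r_pos by (simp add: powr_powr field_simps)
          moreover have "g x powr p * g x powr (- p) = 1" using elim by (simp add: powr_add[symmetric])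
          ultimately show ?thesis by (simp add: algebra_simps)
        qed
        have "(X x / A n) powr p * (Y x / G) powr q \<le> p * (X x / A n) + q * (Y x / G)"
          using Youngs_inequality_0[of p q "X x / A n" "Y x / G"] p0 Xp Yp Ap Gp by simp
        moreover have "(X x / A n) powr p * (Y x / G) powr q = D n x powr r / (A n powr p * G powr q)"
          using XY Xp Yp Ap Gp by (simp add: powr_divide)
        ultimately have "D n x powr r / (A n powr p * G powr q) \<le> p * X x / A n + q * Y x / G" by simp
        then show ?thesis using Ap Gp by (simp add: pos_divide_le_eq)
      qed
    qed
    have intX: "integrable P X" unfolding X_def[abs_def] using A_int[OF n1] .
    have intY: "integrable P Y" unfolding Y_def[abs_def] using G_props(1) .
    have intR: "integrable P (\<lambda>x. (p * X x / A n + q * Y x / G) * (A n powr p * G powr q))"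
      using intX intY by auto
    have "E n \<le> (\<integral>x. (p * X x / A n + q * Y x / G) * (A n powr p * G powr q) \<partial>P)"
      unfolding E_def by (rule integral_mono_AE[OF D_int[OF n1] intR pw])
    also have "\<dots> = (p * (\<integral>x. X x \<partial>P) / A n + q * (\<integral>x. Y x \<partial>P) / G) * (A n powr p * G powr q)"
      using intX intY by simp
    also have "\<dots> = A n powr p * G powr q"
      unfolding X_def[abs_def] Y_def[abs_def] A_def[symmetric] G_def[symmetric] using Ap Gp p0 by simp
    finally show ?thesis unfolding p_def q_def dd_def .
  qed
qed


lemma rate:
  assumes n1: "n \<ge> 1"
  shows "E (Suc n) \<le> E n - (cc * G powr (- (DIM('a) / r))) * E n powr (1 + DIM('a) / r)"
proof -
  define dd where "dd = real DIM('a)"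
  have dd0: "0 < dd" unfolding dd_def by simp
  define p where "p = r / (r + dd)"
  define q where "q = dd / (r + dd)"
  have Gp: "0 < G" by (rule G_props(3))
  have Ap: "0 \<le> A n" by (rule A_nonneg[OF n1])
  have En: "0 \<le> E n" by (rule E_nonneg[OF n1])
  have p0: "0 < p" unfolding p_def using r_pos dd0 by simp
  have h: "E n \<le> A n powr p * G powr q" using holder[OF n1] unfolding p_def q_def dd_def .
  have "E n powr (1/p) \<le> (A n powr p * G powr q) powr (1/p)"
    using h En p0 by (intro powr_mono2) auto
  also have "\<dots> = A n * G powr (q/p)"
    using Ap Gp p0 by (simp add: powr_mult powr_powr)
  finally have h2: "E n powr (1 + dd / r) \<le> A n * G powr (dd / r)"
  proof -
    assume a: "E n powr (1 / p) \<le> A n * G powr (q / p)"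
    have "1 / p = 1 + dd / r" unfolding p_def using r_pos dd0 by (simp add: field_simps)
    moreover have "q / p = dd / r"
    proof -
      have "r + dd \<noteq> 0" using r_pos dd0 by simp
      then show ?thesis unfolding p_def q_def using r_pos by (simp add: divide_simps)
    qed
    ultimately show ?thesis using a by simp
  qed
  have "E n powr (1 + dd / r) * G powr (- (dd / r)) \<le> A n * G powr (dd / r) * G powr (- (dd / r))"
    using h2 Gp by (intro mult_right_mono) auto
  also have "\<dots> = A n" using Gp by (simp add: powr_add[symmetric])
  finally have h3: "E n powr (1 + dd / r) * G powr (- (dd / r)) \<le> A n" .
  have "cc * (E n powr (1 + dd / r) * G powr (- (dd / r))) \<le> cc * A n"
    using h3 cc_pos by (intro mult_left_mono) auto
  then show ?thesis using step[OF n1] unfolding dd_def by (simp add: algebra_simps)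
qed

lemma final:
  assumes n2: "n \<ge> 2"
  shows "quant_err N r (first_pts a n) P \<le>
     phi_r r \<epsilon> DIM('a) powr (- 1 / DIM('a)) * unit_ball_vol N powr (- 1 / DIM('a))
     * (r / DIM('a)) powr (1 / DIM('a))
     * (enn2real (\<integral>\<^sup>+ x. (if g x = 0 then \<infinity> else ennreal (g x powr (- r / DIM('a)))) \<partial>P)) powr (1 / r)
     * (real n - 1) powr (- 1 / DIM('a))"
proof -
  define dd where "dd = real DIM('a)"
  have dd0: "0 < dd" unfolding dd_def by simp
  define \<delta> where "\<delta> = dd / r"
  define k where "k = cc * G powr (- \<delta>)"
  have Gp: "0 < G" by (rule G_props(3))
  have d0: "0 < \<delta>" unfolding \<delta>_def using dd0 r_pos by simp
  have k0: "0 < k" unfolding k_def using cc_pos Gp by simp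
  have bound: "E n \<le> (\<delta> * k * (real n - 1)) powr (- 1 / \<delta>)"
  proof (rule discrete_rate[OF E_nonneg _ k0 d0 n2])
    fix m :: nat assume "m \<ge> 1"
    then show "E (Suc m) \<le> E m - k * E m powr (1 + \<delta>)"
      using rate[of m] unfolding k_def \<delta>_def dd_def by simp
  qed
  have "quant_err N r (first_pts a n) P = E n powr (1/r)" using qerr_E n2 by simp
  also have "\<dots> \<le> ((\<delta> * k * (real n - 1)) powr (- 1 / \<delta>)) powr (1/r)"
    using bound E_nonneg[of n] n2 r_pos by (intro powr_mono2) auto
  also have "\<dots> = (\<delta> * k * (real n - 1)) powr (- 1 / dd)"
    unfolding \<delta>_def using r_pos dd0 by (simp add: powr_powr)
  also have "\<dots> = phi_r r \<epsilon> DIM('a) powr (- 1 / dd) * unit_ball_vol N powr (- 1 / dd)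
     * (r / dd) powr (1 / dd) * G powr (1 / r) * (real n - 1) powr (- 1 / dd)"
  proof -
    have n1: "0 < real n - 1" using n2 by simp
    have ph: "0 < phi_r r \<epsilon> DIM('a)" by (rule phi_pos)
    have V: "0 < unit_ball_vol N" by (rule V_pos[OF norm])
    have "(\<delta> * k * (real n - 1)) powr (- 1 / dd) = \<delta> powr (- 1 / dd) * phi_r r \<epsilon> DIM('a) powr (- 1 / dd)
       * unit_ball_vol N powr (- 1 / dd) * (G powr (- \<delta>)) powr (- 1 / dd) * (real n - 1) powr (- 1 / dd)"
      unfolding k_def cc_def using d0 ph V Gp n1 by (simp add: powr_mult)
    moreover have "(G powr (- \<delta>)) powr (- 1 / dd) = G powr (1 / r)"
      unfolding \<delta>_def using dd0 r_pos by (simp add: powr_powr)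
    moreover have "\<delta> powr (- 1 / dd) = (r / dd) powr (1 / dd)"
      unfolding \<delta>_def using dd0 r_pos by (simp add: powr_minus_divide powr_divide)
    ultimately show ?thesis by (simp add: algebra_simps)
  qed
  finally show ?thesis unfolding dd_def G_props(2) .
qed

end

theorem proposition2p3:
  fixes N :: "'a::euclidean_space \<Rightarrow> real"
    and r \<epsilon> :: real
    and P \<nu> :: "'a measure"
    and a :: "nat \<Rightarrow> 'a"
    and g :: "'a \<Rightarrow> real"
  assumes norm: "is_norm N"
    and r_pos: "0 < r"
    and P_prob: "prob_space P" and P_borel: "sets P = sets borel"
    and moment: "(\<integral>\<^sup>+ x. ennreal (N x powr r) \<partial>P) < \<infinity>"
    and greedy: "greedy_seq N r P a"
    and eps: "0 < \<epsilon>" "\<epsilon> < 1/3"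
    and nu_prob: "prob_space \<nu>" and nu_borel: "sets \<nu> = sets borel"
    and g_meas: "g \<in> borel_measurable borel" and g_nonneg: "\<And>x. 0 \<le> g x"
    and g_bound: "\<And>x t. x \<in> msupp N P \<Longrightarrow> 0 \<le> t \<Longrightarrow> t \<le> \<epsilon> * N (x - a 1) \<Longrightarrow>
        g x * unit_ball_vol N * t ^ DIM('a) \<le> measure \<nu> (nball N x t)"
    and int_fin: "(\<integral>\<^sup>+ x. (if g x = 0 then \<infinity> else ennreal (g x powr (- r / DIM('a)))) \<partial>P) < \<infinity>"
  shows "\<forall>n\<ge>2. quant_err N r (first_pts a n) P \<le>
     phi_r r \<epsilon> DIM('a) powr (- 1 / DIM('a)) * unit_ball_vol N powr (- 1 / DIM('a))
     * (r / DIM('a)) powr (1 / DIM('a))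
     * (enn2real (\<integral>\<^sup>+ x. (if g x = 0 then \<infinity> else ennreal (g x powr (- r / DIM('a)))) \<partial>P)) powr (1 / r)
     * (real n - 1) powr (- 1 / DIM('a))"
  proof -
  interpret setting N r \<epsilon> P \<nu> a g
    by (rule setting.intro[OF norm r_pos P_prob P_borel moment greedy eps nu_prob nu_borel g_meas g_nonneg g_bound int_fin])
  show ?thesis using final by auto
qed

end
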